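(* Let $S$ be a word of length $n$ and $C$ a word. If $C$ is an s-cover of $S$, then there exist positive integers $r_0,\dots,r_{n-1}$ such that the word $S[0]^{r_0}S[1]^{r_1}\cdots S[n-1]^{r_{n-1}}$ belongs to the shuffle closure $C^{\odot}$.
   Context: For words $C,S$, $C$ is an \emph{s-cover} of $S$ if for every position $i$ of $S$ there exist indices $j_0<\dots<j_{|C|-1}$ with $S[j_t]=C[t]$ for all $t$ and $i\in\{j_0,\dots,j_{|C|-1}\}$. For a letter $x$ and integer $r\ge1$, $x^r$ is $x$ repeated $r$ times. The shuffle closure $C^{\odot}$ is the set of words $W$ whose set of positions $\{0,\dots,|W|-1\}$ can be partitioned into pairwise disjoint sets, each of which is the set of positions $j_0<\dots<j_{|C|-1}$ of an occurrence of $C$ as a subsequence of $W$ (i.e., $W$ is an interleaving of copies of $C$). *)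

theory Defs
  imports Main
begin

text \<open>Words are lists. An occurrence of C as a subsequence of S is given by the list of
  its positions j_0 < ... < j_{|C|-1} in S.\<close>

definition occurrence :: "'a list \<Rightarrow> 'a list \<Rightarrow> nat list \<Rightarrow> bool" where
  "occurrence C S js \<longleftrightarrow>
     length js = length C \<and> sorted_wrt (<) js \<and> (\<forall>j\<in>set js. j < length S) \<and>
     (\<forall>t<length C. S ! (js ! t) = C ! t)"

definition s_cover :: "'a list \<Rightarrow> 'a list \<Rightarrow> bool" where
  "s_cover C S \<longleftrightarrow> (\<forall>i<length S. \<exists>js. occurrence C S js \<and> i \<in> set js)"

text \<open>Shuffle closure: the positions of W are partitioned into pairwise disjoint
  position sets of occurrences of C.\<close>

definition shuffle_closure :: "'a list \<Rightarrow> 'a list set" where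
  "shuffle_closure C = {W. \<exists>occs :: nat list list.
      (\<forall>js\<in>set occs. occurrence C W js) \<and>
      (\<forall>a<length occs. \<forall>b<length occs. a \<noteq> b \<longrightarrow> set (occs ! a) \<inter> set (occs ! b) = {}) \<and>
      (\<Union>js\<in>set occs. set js) = {0..<length W}}"

definition expand_word :: "'a list \<Rightarrow> (nat \<Rightarrow> nat) \<Rightarrow> 'a list" where
  "expand_word S r = concat (map (\<lambda>i. replicate (r i) (S ! i)) [0..<length S])"

end

theory Submission
  imports Defs
begin

lemma filter_nth_map:
  "map (nth P) (filter (\<lambda>x. Q (P ! x)) [0..<length P]) = filter Q P"
proof -
  have "filter Q P = filter Q (map (nth P) [0..<length P])" by (simp add: map_nth)
  also have "\<dots> = map (nth P) (filter (Q \<circ> nth P) [0..<length P])" by (simp add: filter_map)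
  finally show ?thesis by (simp add: comp_def)
qed

lemma filter_mem_upt:
  assumes "sorted_wrt (<) xs" "\<forall>j\<in>set xs. j < n"
  shows "filter (\<lambda>p. p \<in> set xs) [0..<n] = xs"
proof (rule sorted_distinct_set_unique)
  show "sorted xs" "distinct xs" using assms(1)
    by (simp_all add: sorted_wrt_iff_nth_less sorted_iff_nth_mono_less distinct_conv_nth)
       (metis less_le nat_neq_iff)+
  show "sorted (filter (\<lambda>p. p \<in> set xs) [0..<n])" "distinct (filter (\<lambda>p. p \<in> set xs) [0..<n])"
    by (auto intro: sorted_wrt_filter)
  show "set (filter (\<lambda>p. p \<in> set xs) [0..<n]) = set xs" using assms(2) by auto
qed

lemma filter_concat_pairs:
  assumes "i < n"
  shows "map fst (filter (\<lambda>q. snd q = i)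
     (concat (map (\<lambda>p. map (\<lambda>j. (p, j)) (filter (\<lambda>j. p \<in> set (f j)) [0..<n])) ps)))
   = filter (\<lambda>p. p \<in> set (f i)) ps"
proof (induction ps)
  case Nil
  then show ?case by simp
next
  case (Cons p ps)
  have "map fst (filter (\<lambda>q. snd q = i) (map (\<lambda>j. (p, j)) (filter (\<lambda>j. p \<in> set (f j)) [0..<n])))
     = map (\<lambda>_. p) (filter (\<lambda>j. j = i) (filter (\<lambda>j. p \<in> set (f j)) [0..<n]))"
    by (simp add: filter_map comp_def)
  also have "filter (\<lambda>j. j = i) (filter (\<lambda>j. p \<in> set (f j)) [0..<n])
       = (if p \<in> set (f i) then [i] else [])"
  proof -
    have u: "[0..<n] = [0..<i] @ i # [Suc i..<n]"
      using assms upt_add_eq_append[of 0 i "n - i"] upt_conv_Cons[of i n] by simp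
    have a: "filter (\<lambda>j. j = i) (filter (\<lambda>j. p \<in> set (f j)) [0..<i]) = []"
      by (simp add: filter_empty_conv)
    have b: "filter (\<lambda>j. j = i) (filter (\<lambda>j. p \<in> set (f j)) [Suc i..<n]) = []"
      by (simp add: filter_empty_conv)
    show ?thesis unfolding u by (simp only: filter_append a b) simp
  qed
  finally show ?case using Cons by auto
qed

theorem mainTheorem20:
  fixes S C :: "'a list"
  assumes "s_cover C S"
  shows "\<exists>r :: nat \<Rightarrow> nat. (\<forall>i<length S. r i > 0) \<and> expand_word S r \<in> shuffle_closure C"
proof -
  define n where "n = length S"
  from assms have "\<forall>i<n. \<exists>js. occurrence C S js \<and> i \<in> set js"
    unfolding s_cover_def n_def by blast
  then obtain f where f: "\<And>i. i < n \<Longrightarrow> occurrence C S (f i) \<and> i \<in> set (f i)"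
    by metis
  define r where "r p = length (filter (\<lambda>j. p \<in> set (f j)) [0..<n])" for p
  define P where "P = concat (map (\<lambda>p. map (\<lambda>j. (p, j)) (filter (\<lambda>j. p \<in> set (f j)) [0..<n])) [0..<n])"
  have rpos: "\<forall>i<length S. r i > 0"
  proof (intro allI impI)
    fix i assume "i < length S"
    then have "i \<in> set (filter (\<lambda>j. i \<in> set (f j)) [0..<n])" using f n_def by auto
    then show "r i > 0" unfolding r_def by (metis length_pos_if_in_set)
  qed
  have W: "expand_word S r = map (\<lambda>q. S ! fst q) P"
    unfolding expand_word_def P_def r_def n_def[symmetric]
    by (simp add: map_concat comp_def map_replicate_const)
  define occ where "occ i = filter (\<lambda>x. snd (P ! x) = i) [0..<length P]" for i
  have key: "map (\<lambda>x. fst (P ! x)) (occ i) = f i" if "i < n" for i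
  proof -
    have "map (\<lambda>x. fst (P ! x)) (occ i) = map fst (map (nth P) (occ i))" by simp
    also have "map (nth P) (occ i) = filter (\<lambda>q. snd q = i) P"
      unfolding occ_def by (rule filter_nth_map)
    also have "map fst (filter (\<lambda>q. snd q = i) P) = filter (\<lambda>p. p \<in> set (f i)) [0..<n]"
      unfolding P_def by (rule filter_concat_pairs[OF that])
    also have "\<dots> = f i"
      using f[OF that] unfolding occurrence_def n_def by (intro filter_mem_upt) auto
    finally show ?thesis .
  qed
  have Psnd: "snd (P ! x) < n" if "x < length P" for x
  proof -
    have "P ! x \<in> set P" using that by simp
    then show ?thesis unfolding P_def by auto
  qed
  have occ_ok: "occurrence C (map (\<lambda>q. S ! fst q) P) (occ i)" if "i < n" for i
  proof -
    have oc: "occurrence C S (f i)" using f that by blast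
    have len: "length (occ i) = length C"
      using arg_cong[OF key[OF that], of length] oc unfolding occurrence_def by simp
    show ?thesis unfolding occurrence_def
    proof (intro conjI ballI allI impI)
      show "length (occ i) = length C" by (rule len)
      show "sorted_wrt (<) (occ i)" unfolding occ_def by (intro sorted_wrt_filter) simp
      fix j assume "j \<in> set (occ i)"
      then show "j < length (map (\<lambda>q. S ! fst q) P)" unfolding occ_def by simp
    next
      fix t assume t: "t < length C"
      have tl: "t < length (occ i)" using t len by simp
      have "occ i ! t < length P"
        using nth_mem[OF tl] unfolding occ_def by simp
      then have "map (\<lambda>q. S ! fst q) P ! (occ i ! t) = S ! fst (P ! (occ i ! t))" by simp
      also have "fst (P ! (occ i ! t)) = map (\<lambda>x. fst (P ! x)) (occ i) ! t" using tl by simp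
      also have "\<dots> = f i ! t" using key[OF that] by simp
      finally show "map (\<lambda>q. S ! fst q) P ! (occ i ! t) = C ! t"
        using oc t unfolding occurrence_def by simp
    qed
  qed
  define occs where "occs = map occ [0..<n]"
  have "map (\<lambda>q. S ! fst q) P \<in> shuffle_closure C"
    unfolding shuffle_closure_def
  proof (intro CollectI exI[of _ occs] conjI)
    show "\<forall>js\<in>set occs. occurrence C (map (\<lambda>q. S ! fst q) P) js"
      unfolding occs_def using occ_ok by auto
    show "\<forall>a<length occs. \<forall>b<length occs. a \<noteq> b \<longrightarrow> set (occs ! a) \<inter> set (occs ! b) = {}"
      unfolding occs_def occ_def by auto
    show "(\<Union>js\<in>set occs. set js) = {0..<length (map (\<lambda>q. S ! fst q) P)}"
    proof
      show "(\<Union>js\<in>set occs. set js) \<subseteq> {0..<length (map (\<lambda>q. S ! fst q) P)}"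
        unfolding occs_def occ_def by auto
      show "{0..<length (map (\<lambda>q. S ! fst q) P)} \<subseteq> (\<Union>js\<in>set occs. set js)"
      proof
        fix x assume "x \<in> {0..<length (map (\<lambda>q. S ! fst q) P)}"
        then have x: "x < length P" by simp
        then have "x \<in> set (occ (snd (P ! x)))" unfolding occ_def by simp
        moreover have "occ (snd (P ! x)) \<in> set occs" unfolding occs_def using Psnd[OF x] by simp
        ultimately show "x \<in> (\<Union>js\<in>set occs. set js)" by blast
      qed
    qed
  qed
  then show ?thesis using rpos W by metis
qed

end
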